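(* Let $X,Y,\tilde X,\tilde Y$ be cellular spaces with $X$ and $\tilde X$ compact, let $r\ge0$, let $k\colon\tilde X\to X$ and $h\colon Y\to\tilde Y$ be maps, and let $a,b\colon X\to Y$ be maps with $a\overset{r}{\approx}b$. Then $a\circ k\overset{r}{\approx}b\circ k$ (as maps $\tilde X\to Y$) and $h\circ a\overset{r}{\approx}h\circ b$ (as maps $X\to\tilde Y$).
   Context: Cellular space = based CW complex; maps based. Strong similarity: $\langle W\rangle$ = free abelian group on a set $W$. $Y^X$ = based maps (compact-open), based at the constant map; $Y^X_a$ = path component of $a$; $V\mapsto V|_R$ restriction; $\mathcal F_n(X)$ = finite $R\subseteq X$ containing the basepoint with $|R|\le n+1$; $\langle Y^X\rangle^{(s)}=\{V:V|_R=0\ \forall R\in\mathcal F_{s-1}(X)\}$. For unbased $U,V$: $V^{(U)}$ = unbased maps; $\Xi^U(v)$ = constant map at $v$; for $U=\coprod_iU_i$ the combining product $\boxed{\sqcup}_i\langle w_i\rangle=\langle w\rangle$, $w|_{U_i}=w_i$, multilinear. For nonempty finite $E$: simplex $\Delta E$, faces $\Delta F$; layouts = sets $A$ of pairwise disjoint nonempty subsets; $\Delta[A]=\coprod_{F\in A}\Delta F$; $S\in\langle V^{(\Delta E)}\rangle$ fissile if $S|_{\Delta[A]}=\boxed{\sqcup}_{F\in A}S|_{\Delta F}$ for all layouts. $U\wr X=(U\times X)/(U\times\{x_0\})$, $\#^X(w)(u\wr x)=w(u)(x)$, $\langle (Y^X)^{(U)}\rangle^{(s)}_X=\langle\#^X\rangle^{-1}\langle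 Y^{U\wr X}\rangle^{(s)}$. $a\overset{r}{\approx}b$ iff for each nonempty finite $E$ there is a fissile $S\in\langle (Y^X_a)^{(\Delta E)}\rangle$ with $\langle\Xi^{\Delta E}(b)\rangle-S\in\langle (Y^X)^{(\Delta E)}\rangle^{(r+1)}_X$. *)

theory Defs
  imports "HOL-Analysis.Analysis" "HOL-Library.Poly_Mapping"
begin

definition RN :: "(nat \<Rightarrow> real) topology" where
  "RN = product_topology (\<lambda>_. euclideanreal) UNIV"

definition disc :: "nat \<Rightarrow> (nat \<Rightarrow> real) set" where
  "disc n = {x. (\<forall>i\<ge>n. x i = 0) \<and> (\<Sum>i<n. (x i)^2) \<le> 1}"

definition open_disc :: "nat \<Rightarrow> (nat \<Rightarrow> real) set" where
  "open_disc n = {x. (\<forall>i\<ge>n. x i = 0) \<and> (\<Sum>i<n. (x i)^2) < 1}"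

definition sphere_n :: "nat \<Rightarrow> (nat \<Rightarrow> real) set" where
  "sphere_n n = {x. (\<forall>i\<ge>n. x i = 0) \<and> (\<Sum>i<n. (x i)^2) = 1}"

section \<open>CW complexes (Hatcher, Prop. A.2 characterisation) and cellular spaces\<close>

definition cw_structure ::
  "'a topology \<Rightarrow> 'a set set \<Rightarrow> ('a set \<Rightarrow> nat) \<Rightarrow> ('a set \<Rightarrow> (nat \<Rightarrow> real) \<Rightarrow> 'a) \<Rightarrow> bool" where
  "cw_structure X C cdim chi \<longleftrightarrow>
     Hausdorff_space X \<and> pairwise disjnt C \<and> {} \<notin> C \<and> \<Union>C = topspace X \<and>
     (\<forall>e\<in>C. continuous_map (subtopology RN (disc (cdim e))) X (chi e) \<and>
             chi e ` open_disc (cdim e) = e \<and>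
             homeomorphic_map (subtopology RN (open_disc (cdim e))) (subtopology X e) (chi e) \<and>
             (\<exists>D. finite D \<and> D \<subseteq> C \<and> (\<forall>d\<in>D. cdim d < cdim e) \<and>
                  chi e ` sphere_n (cdim e) \<subseteq> \<Union>D)) \<and>
     (\<forall>S. S \<subseteq> topspace X \<longrightarrow>
          (closedin X S \<longleftrightarrow> (\<forall>e\<in>C. closedin X (S \<inter> X closure_of e))))"

definition cellular_space :: "'a topology \<Rightarrow> 'a \<Rightarrow> bool" where
  "cellular_space X x0 \<longleftrightarrow> (\<exists>C cdim chi. cw_structure X C cdim chi \<and> {x0} \<in> C)"

definition based_maps :: "'x topology \<Rightarrow> 'x \<Rightarrow> 'y topology \<Rightarrow> 'y \<Rightarrow> ('x \<Rightarrow> 'y) set" where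
  "based_maps X x0 Y y0 = {f. continuous_map X Y f \<and> f x0 = y0 \<and> f \<in> extensional (topspace X)}"

definition unbased_maps :: "'u topology \<Rightarrow> 'v topology \<Rightarrow> ('u \<Rightarrow> 'v) set" where
  "unbased_maps U V = {w. continuous_map U V w \<and> w \<in> extensional (topspace U)}"

definition CO :: "'x topology \<Rightarrow> 'x \<Rightarrow> 'y topology \<Rightarrow> 'y \<Rightarrow> ('x \<Rightarrow> 'y) topology" where
  "CO X x0 Y y0 = subtopology
     (topology_generated_by {{f. f ` K \<subseteq> U} | K U. compactin X K \<and> openin Y U})
     (based_maps X x0 Y y0)"

definition free_on :: "'a set \<Rightarrow> ('a \<Rightarrow>\<^sub>0 int) set" where
  "free_on W = {V. Poly_Mapping.keys V \<subseteq> W}"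

definition restr_frag :: "'x set \<Rightarrow> (('x \<Rightarrow> 'y) \<Rightarrow>\<^sub>0 int) \<Rightarrow> (('x \<Rightarrow> 'y) \<Rightarrow>\<^sub>0 int)" where
  "restr_frag R V = frag_extend (\<lambda>f. frag_of (restrict f R)) V"

definition Fsets :: "'x topology \<Rightarrow> 'x \<Rightarrow> nat \<Rightarrow> 'x set set" where
  "Fsets X x0 n = {R. finite R \<and> R \<subseteq> topspace X \<and> x0 \<in> R \<and> card R \<le> Suc n}"

definition filt :: "'x topology \<Rightarrow> 'x \<Rightarrow> 'y topology \<Rightarrow> 'y \<Rightarrow> nat \<Rightarrow> (('x \<Rightarrow> 'y) \<Rightarrow>\<^sub>0 int) set" where
  "filt X x0 Y y0 s = {V \<in> free_on (based_maps X x0 Y y0). \<forall>R\<in>Fsets X x0 (s - 1). restr_frag R V = 0}"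

definition dsimplex :: "nat set \<Rightarrow> (nat \<Rightarrow> real) set" where
  "dsimplex E = {t. (\<forall>i. 0 \<le> t i) \<and> (\<forall>i. i \<notin> E \<longrightarrow> t i = 0) \<and> sum t E = 1}"

definition dsimplex_top :: "nat set \<Rightarrow> (nat \<Rightarrow> real) topology" where
  "dsimplex_top E = subtopology RN (dsimplex E)"

definition layout :: "nat set \<Rightarrow> nat set set \<Rightarrow> bool" where
  "layout E A \<longleftrightarrow> A \<subseteq> Pow E \<and> {} \<notin> A \<and> pairwise disjnt A"

text \<open>Delta[A] = disjoint union of the faces Delta F, realised inside Delta E
  (faces on disjoint vertex sets are disjoint closed subsets).\<close>
definition layout_space :: "nat set set \<Rightarrow> (nat \<Rightarrow> real) set" where
  "layout_space A = (\<Union>F\<in>A. dsimplex F)"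

definition glue :: "nat set set \<Rightarrow> (nat set \<Rightarrow> (nat \<Rightarrow> real) \<Rightarrow> 'v) \<Rightarrow> (nat \<Rightarrow> real) \<Rightarrow> 'v" where
  "glue A g = (\<lambda>t. if \<exists>F\<in>A. t \<in> dsimplex F then g (THE F. F \<in> A \<and> t \<in> dsimplex F) t else undefined)"

text \<open>Combining product: the multilinear extension of
  (w_F)_{F in A} |-> [w], w restricted to Delta F equal to w_F.\<close>
definition comb_prod ::
  "nat set set \<Rightarrow> (nat set \<Rightarrow> (((nat \<Rightarrow> real) \<Rightarrow> 'v) \<Rightarrow>\<^sub>0 int)) \<Rightarrow> (((nat \<Rightarrow> real) \<Rightarrow> 'v) \<Rightarrow>\<^sub>0 int)" where
  "comb_prod A c = (\<Sum>g \<in> PiE A (\<lambda>F. Poly_Mapping.keys (c F)).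
      frag_cmul (\<Prod>F\<in>A. poly_mapping.lookup (c F) (g F)) (frag_of (glue A g)))"

definition fissile :: "nat set \<Rightarrow> (((nat \<Rightarrow> real) \<Rightarrow> 'v) \<Rightarrow>\<^sub>0 int) \<Rightarrow> bool" where
  "fissile E S \<longleftrightarrow> (\<forall>A. layout E A \<longrightarrow>
      restr_frag (layout_space A) S = comb_prod A (\<lambda>F. restr_frag (dsimplex F) S))"

definition quot_top :: "'a topology \<Rightarrow> ('a \<Rightarrow> 'b) \<Rightarrow> 'b topology" where
  "quot_top X q = topology (\<lambda>S. S \<subseteq> q ` topspace X \<and> openin X {x \<in> topspace X. q x \<in> S})"

text \<open>Points of U wr X: None is the basepoint (the collapsed U x {x0}); Some (u,x), x ~= x0.\<close>
definition wr_pt :: "'x \<Rightarrow> 'u \<times> 'x \<Rightarrow> ('u \<times> 'x) option" where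
  "wr_pt x0 p = (if snd p = x0 then None else Some p)"

definition wr_top :: "'u topology \<Rightarrow> 'x topology \<Rightarrow> 'x \<Rightarrow> ('u \<times> 'x) option topology" where
  "wr_top U X x0 = quot_top (prod_topology U X) (wr_pt x0)"

definition sharp :: "'u topology \<Rightarrow> 'x topology \<Rightarrow> 'x \<Rightarrow> 'y \<Rightarrow> ('u \<Rightarrow> 'x \<Rightarrow> 'y) \<Rightarrow> ('u \<times> 'x) option \<Rightarrow> 'y" where
  "sharp U X x0 y0 w = restrict (\<lambda>p. case p of None \<Rightarrow> y0 | Some (u, x) \<Rightarrow> w u x) (topspace (wr_top U X x0))"

definition filt_wr :: "'u topology \<Rightarrow> 'x topology \<Rightarrow> 'x \<Rightarrow> 'y topology \<Rightarrow> 'y \<Rightarrow> nat \<Rightarrow>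
    (('u \<Rightarrow> 'x \<Rightarrow> 'y) \<Rightarrow>\<^sub>0 int) set" where
  "filt_wr U X x0 Y y0 s = {V \<in> free_on (unbased_maps U (CO X x0 Y y0)).
      frag_extend (\<lambda>w. frag_of (sharp U X x0 y0 w)) V \<in> filt (wr_top U X x0) None Y y0 s}"

definition approx_r :: "'x topology \<Rightarrow> 'x \<Rightarrow> 'y topology \<Rightarrow> 'y \<Rightarrow> nat \<Rightarrow> ('x \<Rightarrow> 'y) \<Rightarrow> ('x \<Rightarrow> 'y) \<Rightarrow> bool" where
  "approx_r X x0 Y y0 r a b \<longleftrightarrow>
    (let a' = restrict a (topspace X); b' = restrict b (topspace X); M = CO X x0 Y y0 in
     \<forall>E::nat set. finite E \<and> E \<noteq> {} \<longrightarrow>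
       (\<exists>S. S \<in> free_on (unbased_maps (dsimplex_top E) (subtopology M (path_component_of_set M a'))) \<and>
            fissile E S \<and>
            frag_of (restrict (\<lambda>_. b') (dsimplex E)) - S \<in> filt_wr (dsimplex_top E) X x0 Y y0 (Suc r)))"

end

theory Submission
  imports Defs
begin


lemma frag_cmul_sum_left: "finite I \<Longrightarrow> frag_cmul (\<Sum>i\<in>I. f i) x = (\<Sum>i\<in>I. frag_cmul (f i) x)"
  by (induction I rule: finite_induct) (simp_all add: frag_cmul_distrib)

lemma comb_prod_alt:
  assumes "finite A" "\<And>F. F\<in>A \<Longrightarrow> Poly_Mapping.keys (c F) \<subseteq> K F" "\<And>F. F\<in>A \<Longrightarrow> finite (K F)"
  shows "comb_prod A c = (\<Sum>g\<in>PiE A K. frag_cmul (\<Prod>F\<in>A. poly_mapping.lookup (c F) (g F)) (frag_of (glue A g)))"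
  unfolding comb_prod_def
proof (rule sum.mono_neutral_left)
  show "finite (PiE A K)" using assms by (simp add: finite_PiE)
  show "PiE A (\<lambda>F. Poly_Mapping.keys (c F)) \<subseteq> PiE A K" using assms(2) by (rule PiE_mono)
  show "\<forall>g\<in>PiE A K - PiE A (\<lambda>F. Poly_Mapping.keys (c F)).
     frag_cmul (\<Prod>F\<in>A. poly_mapping.lookup (c F) (g F)) (frag_of (glue A g)) = 0"
  proof
    fix g assume g: "g \<in> PiE A K - PiE A (\<lambda>F. Poly_Mapping.keys (c F))"
    then obtain F where "F \<in> A" "g F \<notin> Poly_Mapping.keys (c F)"
      by (auto simp: PiE_iff)
    then have "(\<Prod>F\<in>A. poly_mapping.lookup (c F) (g F)) = 0"
      using assms(1) by (metis (mono_tags, lifting) in_keys_iff prod_zero)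
    then show "frag_cmul (\<Prod>F\<in>A. poly_mapping.lookup (c F) (g F)) (frag_of (glue A g)) = 0" by simp
  qed
qed

lemma lookup_push:
  "poly_mapping.lookup (frag_extend (\<lambda>x. frag_of (q x)) c) y
     = (\<Sum>x\<in>{x\<in>Poly_Mapping.keys c. q x = y}. poly_mapping.lookup c x)"
  unfolding frag_extend_def lookup_sum
  by (simp add: sum.inter_filter if_distrib eq_commute cong: if_cong)

lemma comb_prod_push:
  assumes fin: "finite A"
    and gl: "\<And>g h. (\<forall>F\<in>A. h F = q F (g F)) \<Longrightarrow> glue A h = Q (glue A g)"
  shows "comb_prod A (\<lambda>F. frag_extend (\<lambda>x. frag_of (q F x)) (c F))
       = frag_extend (\<lambda>x. frag_of (Q x)) (comb_prod A c)"
proof -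
  define K where "K F = Poly_Mapping.keys (c F)" for F
  define d where "d F = frag_extend (\<lambda>x. frag_of (q F x)) (c F)" for F
  define K' where "K' F = q F ` K F" for F
  define B where "B h F = {x\<in>K F. q F x = h F}" for h F
  define m where "m F x = poly_mapping.lookup (c F) x" for F x
  define \<phi> where "\<phi> g = restrict (\<lambda>F. q F (g F)) A" for g
  have finK: "finite (K F)" for F by (simp add: K_def)
  have kd: "Poly_Mapping.keys (d F) \<subseteq> K' F" for F
    unfolding d_def K'_def K_def using keys_frag_extend by fastforce
  have "comb_prod A d = (\<Sum>h\<in>PiE A K'. frag_cmul (\<Prod>F\<in>A. poly_mapping.lookup (d F) (h F)) (frag_of (glue A h)))"
    by (rule comb_prod_alt) (use fin kd finK K'_def in auto)
  also have "\<dots> = (\<Sum>h\<in>PiE A K'. frag_cmul (\<Sum>g\<in>PiE A (B h). \<Prod>F\<in>A. m F (g F)) (frag_of (glue A h)))"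
  proof (rule sum.cong[OF refl])
    fix h assume "h \<in> PiE A K'"
    have "(\<Prod>F\<in>A. poly_mapping.lookup (d F) (h F)) = (\<Prod>F\<in>A. \<Sum>x\<in>B h F. m F x)"
      unfolding d_def lookup_push B_def m_def K_def by simp
    also have "\<dots> = (\<Sum>g\<in>PiE A (B h). \<Prod>F\<in>A. m F (g F))"
      by (rule prod_sum_PiE) (use fin finK B_def in auto)
    finally show "frag_cmul (\<Prod>F\<in>A. poly_mapping.lookup (d F) (h F)) (frag_of (glue A h))
        = frag_cmul (\<Sum>g\<in>PiE A (B h). \<Prod>F\<in>A. m F (g F)) (frag_of (glue A h))" by simp
  qed
  also have "\<dots> = (\<Sum>h\<in>PiE A K'. \<Sum>g\<in>{g\<in>PiE A K. \<phi> g = h}. frag_cmul (\<Prod>F\<in>A. m F (g F)) (frag_of (Q (glue A g))))"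
  proof (rule sum.cong[OF refl])
    fix h assume h: "h \<in> PiE A K'"
    have eq: "{g\<in>PiE A K. \<phi> g = h} = PiE A (B h)"
    proof (intro set_eqI iffI)
      fix g assume "g \<in> {g\<in>PiE A K. \<phi> g = h}"
      then show "g \<in> PiE A (B h)" unfolding B_def \<phi>_def by (auto simp: PiE_iff)
    next
      fix g assume "g \<in> PiE A (B h)"
      then show "g \<in> {g\<in>PiE A K. \<phi> g = h}" using h unfolding B_def \<phi>_def
        by (auto simp: PiE_iff extensional_def restrict_def fun_eq_iff)
    qed
    show "frag_cmul (\<Sum>g\<in>PiE A (B h). \<Prod>F\<in>A. m F (g F)) (frag_of (glue A h))
      = (\<Sum>g\<in>{g\<in>PiE A K. \<phi> g = h}. frag_cmul (\<Prod>F\<in>A. m F (g F)) (frag_of (Q (glue A g))))"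
      unfolding eq
      apply (subst frag_cmul_sum_left)
       apply (use fin finK B_def in \<open>simp add: finite_PiE\<close>)
      apply (rule sum.cong[OF refl])
      apply (subst gl[symmetric])
       apply (auto simp: B_def PiE_iff)
      done
  qed
  also have "\<dots> = (\<Sum>g\<in>PiE A K. frag_cmul (\<Prod>F\<in>A. m F (g F)) (frag_of (Q (glue A g))))"
    by (rule sum.group) (use fin finK K'_def \<phi>_def in \<open>auto simp: finite_PiE PiE_iff\<close>)
  also have "\<dots> = frag_extend (\<lambda>x. frag_of (Q x)) (comb_prod A c)"
    unfolding comb_prod_def K_def m_def
    by (subst frag_extend_sum) (auto simp: finite_PiE frag_extend_cmul fin)
  finally show ?thesis unfolding d_def .
qed

definition post :: "('a \<Rightarrow> 'b) \<Rightarrow> 't set \<Rightarrow> ('t \<Rightarrow> 'a) \<Rightarrow> 't \<Rightarrow> 'b" where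
  "post \<psi> D w = restrict (\<lambda>t. \<psi> (w t)) D"

definition pushR :: "('a \<Rightarrow> 'b) \<Rightarrow> 't set \<Rightarrow> (('t \<Rightarrow> 'a) \<Rightarrow>\<^sub>0 int) \<Rightarrow> (('t \<Rightarrow> 'b) \<Rightarrow>\<^sub>0 int)" where
  "pushR \<psi> D V = frag_extend (\<lambda>w. frag_of (post \<psi> D w)) V"

lemma restr_pushR: "R \<subseteq> D \<Longrightarrow> restr_frag R (pushR \<psi> D V) = pushR \<psi> R V"
  unfolding restr_frag_def pushR_def
  apply (subst frag_extend_compose[of _ "post \<psi> D", unfolded o_def])
  apply (rule frag_extend_eq)
  apply (rule arg_cong[where f=frag_of])
  apply (auto simp: post_def restrict_def fun_eq_iff)
  done

lemma pushR_restr: "pushR \<psi> R (restr_frag R V) = pushR \<psi> R V"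
  unfolding restr_frag_def pushR_def
  apply (subst frag_extend_compose[of _ "\<lambda>f. restrict f R", unfolded o_def])
  apply (rule frag_extend_eq)
  apply (rule arg_cong[where f=frag_of])
  apply (auto simp: post_def restrict_def fun_eq_iff)
  done

lemma dsimplex_mono: "F \<subseteq> E \<Longrightarrow> finite E \<Longrightarrow> dsimplex F \<subseteq> dsimplex E"
proof
  fix t assume FE: "F \<subseteq> E" "finite E" and t: "t \<in> dsimplex F"
  have "sum t E = sum t F"
    by (rule sum.mono_neutral_right) (use FE t in \<open>auto simp: dsimplex_def\<close>)
  then show "t \<in> dsimplex E" using t FE by (auto simp: dsimplex_def)
qed

lemma dsimplex_disjnt: "disjnt F G \<Longrightarrow> disjnt (dsimplex F) (dsimplex G)"
proof (rule ccontr)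
  assume d: "disjnt F G" and "\<not> disjnt (dsimplex F) (dsimplex G)"
  then obtain t where t: "t \<in> dsimplex F" "t \<in> dsimplex G" by (auto simp: disjnt_def)
  have "\<forall>i\<in>F. t i = 0" using t d by (auto simp: dsimplex_def disjnt_def)
  then have "sum t F = 0" by simp
  then show False using t by (simp add: dsimplex_def)
qed

lemma layout_space_sub: "layout E A \<Longrightarrow> finite E \<Longrightarrow> layout_space A \<subseteq> dsimplex E"
  unfolding layout_space_def layout_def using dsimplex_mono by blast

lemma glue_post:
  assumes "layout E A" and h: "\<forall>F\<in>A. h F = post \<psi> (dsimplex F) (g F)"
  shows "glue A h = post \<psi> (layout_space A) (glue A g)"
proof
  fix t
  show "glue A h t = post \<psi> (layout_space A) (glue A g) t"
  proof (cases "\<exists>F\<in>A. t \<in> dsimplex F")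
    case True
    then obtain F0 where F0: "F0 \<in> A" "t \<in> dsimplex F0" by blast
    have the: "(THE F. F \<in> A \<and> t \<in> dsimplex F) = F0"
    proof (rule the_equality)
      fix F assume "F \<in> A \<and> t \<in> dsimplex F"
      then show "F = F0" using F0 assms(1) dsimplex_disjnt unfolding layout_def pairwise_def
        by (metis disjnt_iff)
    qed (use F0 in auto)
    show ?thesis using True F0 h unfolding glue_def post_def layout_space_def by (auto simp: the)
  next
    case False
    then show ?thesis unfolding glue_def post_def layout_space_def by auto
  qed
qed

lemma comb_prod_cong: "(\<And>F. F \<in> A \<Longrightarrow> c F = c' F) \<Longrightarrow> comb_prod A c = comb_prod A c'"
  unfolding comb_prod_def
  by (rule sum.cong) (auto intro!: PiE_cong prod.cong simp: PiE_iff)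

lemma fissile_push:
  assumes "fissile E S" "finite E"
  shows "fissile E (pushR \<psi> (dsimplex E) S)"
  unfolding fissile_def
proof (intro allI impI)
  fix A assume L: "layout E A"
  have finA: "finite A" using L assms(2) unfolding layout_def by (meson finite_Pow_iff finite_subset)
  have sub: "dsimplex F \<subseteq> dsimplex E" if "F \<in> A" for F
    using L that assms(2) dsimplex_mono unfolding layout_def by blast
  have "restr_frag (layout_space A) (pushR \<psi> (dsimplex E) S) = pushR \<psi> (layout_space A) S"
    by (rule restr_pushR[OF layout_space_sub[OF L assms(2)]])
  also have "\<dots> = pushR \<psi> (layout_space A) (restr_frag (layout_space A) S)"
    by (rule pushR_restr[symmetric])
  also have "\<dots> = pushR \<psi> (layout_space A) (comb_prod A (\<lambda>F. restr_frag (dsimplex F) S))"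
    using assms(1) L unfolding fissile_def by simp
  also have "\<dots> = comb_prod A (\<lambda>F. pushR \<psi> (dsimplex F) (restr_frag (dsimplex F) S))"
    unfolding pushR_def
    by (rule comb_prod_push[symmetric, OF finA]) (rule glue_post[OF L], auto)
  also have "\<dots> = comb_prod A (\<lambda>F. restr_frag (dsimplex F) (pushR \<psi> (dsimplex E) S))"
    by (rule comb_prod_cong) (simp add: pushR_restr restr_pushR sub)
  finally show "restr_frag (layout_space A) (pushR \<psi> (dsimplex E) S) =
    comb_prod A (\<lambda>F. restr_frag (dsimplex F) (pushR \<psi> (dsimplex E) S))" .
qed

lemma topspace_CO [simp]: "topspace (CO X x0 Y y0) = based_maps X x0 Y y0"
proof -
  have "UNIV \<in> {{f. f ` K \<subseteq> U} | K U. compactin X K \<and> openin Y U}"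
    by (rule CollectI, rule exI[of _ "{}"], rule exI[of _ "topspace Y"]) auto
  then show ?thesis unfolding CO_def by auto
qed

lemma topspace_RN [simp]: "topspace RN = UNIV"
  by (simp add: RN_def)

lemma topspace_dsimplex_top [simp]: "topspace (dsimplex_top E) = dsimplex E"
  by (simp add: dsimplex_top_def)

lemma openin_CO_basic:
  assumes "compactin X K" "openin Y U"
  shows "openin (CO X x0 Y y0) {f \<in> based_maps X x0 Y y0. f ` K \<subseteq> U}"
  unfolding CO_def openin_subtopology
  by (rule exI[of _ "{f. f ` K \<subseteq> U}"]) (use assms in \<open>auto intro!: topology_generated_by_Basis\<close>)

lemma continuous_into_CO:
  assumes b: "\<And>f. f \<in> based_maps X x0 Y y0 \<Longrightarrow> \<psi> f \<in> based_maps X2 x02 Y2 y02"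
    and o: "\<And>K U. compactin X2 K \<Longrightarrow> openin Y2 U \<Longrightarrow>
          openin (CO X x0 Y y0) {f \<in> based_maps X x0 Y y0. \<psi> f ` K \<subseteq> U}"
  shows "continuous_map (CO X x0 Y y0) (CO X2 x02 Y2 y02) \<psi>"
proof -
  have "continuous_map (CO X x0 Y y0)
      (topology_generated_by {{f. f ` K \<subseteq> U} | K U. compactin X2 K \<and> openin Y2 U}) \<psi>"
  proof (rule continuous_on_generated_topo)
    fix V assume "V \<in> {{f. f ` K \<subseteq> U} | K U. compactin X2 K \<and> openin Y2 U}"
    then obtain K U where KU: "V = {f. f ` K \<subseteq> U}" "compactin X2 K" "openin Y2 U" by blast
    have "\<psi> -` V \<inter> topspace (CO X x0 Y y0) = {f \<in> based_maps X x0 Y y0. \<psi> f ` K \<subseteq> U}"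
      using KU by auto
    then show "openin (CO X x0 Y y0) (\<psi> -` V \<inter> topspace (CO X x0 Y y0))" using o KU by simp
  next
    have "UNIV \<in> {{f. f ` K \<subseteq> U} | K U. compactin X2 K \<and> openin Y2 U}"
      by (rule CollectI, rule exI[of _ "{}"], rule exI[of _ "topspace Y2"]) auto
    then show "\<psi> ` topspace (CO X x0 Y y0) \<subseteq> \<Union> {{f. f ` K \<subseteq> U} | K U. compactin X2 K \<and> openin Y2 U}"
      by blast
  qed
  then show ?thesis
    unfolding CO_def[of X2 x02 Y2 y02] using b
    by (auto simp: continuous_map_in_subtopology)
qed

lemma pc_map:
  assumes "continuous_map M M2 \<psi>" "continuous_map T (subtopology M (path_component_of_set M a)) w"
  shows "continuous_map T (subtopology M2 (path_component_of_set M2 (\<psi> a))) (\<lambda>t. \<psi> (w t))"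
proof -
  have w: "continuous_map T M w" "w ` topspace T \<subseteq> path_component_of_set M a"
    using assms(2) by (auto simp: continuous_map_in_subtopology)
  have "path_component_of M2 (\<psi> a) (\<psi> (w t))" if "t \<in> topspace T" for t
  proof -
    have "path_component_of M a (w t)" using w(2) that by auto
    then obtain g where g: "pathin M g" "g 0 = a" "g 1 = w t"
      by (auto simp: path_component_of_set)
    then show ?thesis unfolding path_component_of_set
      by (intro exI[of _ "\<psi> \<circ> g"]) (auto intro: pathin_compose assms(1))
  qed
  then show ?thesis using w(1) assms(1)
    by (auto simp: continuous_map_in_subtopology intro: continuous_map_compose[of _ _ _ _ \<psi>, unfolded o_def])
qed

lemma pushR_keys: "Poly_Mapping.keys (pushR \<psi> D V) \<subseteq> post \<psi> D ` Poly_Mapping.keys V"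
  unfolding pushR_def using keys_frag_extend by fastforce

lemma approx_transfer:
  fixes \<psi> :: "('x \<Rightarrow> 'y) \<Rightarrow> ('x2 \<Rightarrow> 'y2)"
  assumes cont: "continuous_map (CO X x0 Y y0) (CO X2 x02 Y2 y02) \<psi>"
    and wr: "\<And>E V. finite E \<Longrightarrow> E \<noteq> {} \<Longrightarrow> V \<in> filt_wr (dsimplex_top E) X x0 Y y0 (Suc r) \<Longrightarrow>
        pushR \<psi> (dsimplex E) V \<in> filt_wr (dsimplex_top E) X2 x02 Y2 y02 (Suc r)"
    and ea: "\<psi> (restrict a (topspace X)) = restrict a2 (topspace X2)"
    and eb: "\<psi> (restrict b (topspace X)) = restrict b2 (topspace X2)"
    and ap: "approx_r X x0 Y y0 r a b"
  shows "approx_r X2 x02 Y2 y02 r a2 b2"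
  unfolding approx_r_def Let_def
proof (intro allI impI)
  fix E :: "nat set" assume E: "finite E \<and> E \<noteq> {}"
  obtain S where S1: "S \<in> free_on (unbased_maps (dsimplex_top E)
        (subtopology (CO X x0 Y y0) (path_component_of_set (CO X x0 Y y0) (restrict a (topspace X)))))"
    and S2: "fissile E S"
    and S3: "frag_of (restrict (\<lambda>_. restrict b (topspace X)) (dsimplex E)) - S
        \<in> filt_wr (dsimplex_top E) X x0 Y y0 (Suc r)"
    using ap E unfolding approx_r_def Let_def by blast
  define S' where "S' = pushR \<psi> (dsimplex E) S"
  have "S' \<in> free_on (unbased_maps (dsimplex_top E)
        (subtopology (CO X2 x02 Y2 y02) (path_component_of_set (CO X2 x02 Y2 y02) (restrict a2 (topspace X2)))))"
    unfolding free_on_def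
  proof
    show "Poly_Mapping.keys S' \<subseteq> unbased_maps (dsimplex_top E)
        (subtopology (CO X2 x02 Y2 y02) (path_component_of_set (CO X2 x02 Y2 y02) (restrict a2 (topspace X2))))"
    proof
      fix w' assume "w' \<in> Poly_Mapping.keys S'"
      then obtain w where w: "w \<in> Poly_Mapping.keys S" "w' = post \<psi> (dsimplex E) w"
        using pushR_keys unfolding S'_def by blast
      then have wc: "continuous_map (dsimplex_top E)
          (subtopology (CO X x0 Y y0) (path_component_of_set (CO X x0 Y y0) (restrict a (topspace X)))) w"
        using S1 by (auto simp: free_on_def unbased_maps_def)
      have "continuous_map (dsimplex_top E)
          (subtopology (CO X2 x02 Y2 y02) (path_component_of_set (CO X2 x02 Y2 y02) (restrict a2 (topspace X2))))
          (\<lambda>t. \<psi> (w t))"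
        using pc_map[OF cont wc] ea by simp
      then have "continuous_map (dsimplex_top E)
          (subtopology (CO X2 x02 Y2 y02) (path_component_of_set (CO X2 x02 Y2 y02) (restrict a2 (topspace X2))))
          w'"
        by (rule continuous_map_eq) (auto simp: w post_def)
      then show "w' \<in> unbased_maps (dsimplex_top E)
          (subtopology (CO X2 x02 Y2 y02) (path_component_of_set (CO X2 x02 Y2 y02) (restrict a2 (topspace X2))))"
        by (auto simp: unbased_maps_def w post_def)
    qed
  qed
  moreover have "fissile E S'"
    unfolding S'_def using fissile_push S2 E by blast
  moreover have "frag_of (restrict (\<lambda>_. restrict b2 (topspace X2)) (dsimplex E)) - S'
      = pushR \<psi> (dsimplex E) (frag_of (restrict (\<lambda>_. restrict b (topspace X)) (dsimplex E)) - S)"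
  proof -
    have "post \<psi> (dsimplex E) (restrict (\<lambda>_. restrict b (topspace X)) (dsimplex E))
        = restrict (\<lambda>_. restrict b2 (topspace X2)) (dsimplex E)"
      unfolding post_def by (rule restrict_ext) (simp add: eb)
    then show ?thesis unfolding S'_def pushR_def frag_extend_diff by simp
  qed
  then have "frag_of (restrict (\<lambda>_. restrict b2 (topspace X2)) (dsimplex E)) - S'
      \<in> filt_wr (dsimplex_top E) X2 x02 Y2 y02 (Suc r)"
    using wr[OF _ _ S3] E by simp
  ultimately show "\<exists>S. S \<in> free_on (unbased_maps (dsimplex_top E)
        (subtopology (CO X2 x02 Y2 y02) (path_component_of_set (CO X2 x02 Y2 y02) (restrict a2 (topspace X2))))) \<and>
       fissile E S \<and>
       frag_of (restrict (\<lambda>_. restrict b2 (topspace X2)) (dsimplex E)) - S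
         \<in> filt_wr (dsimplex_top E) X2 x02 Y2 y02 (Suc r)"
    by blast
qed

lemma istopology_quot: "istopology (\<lambda>S. S \<subseteq> q ` topspace X \<and> openin X {x \<in> topspace X. q x \<in> S})"
  unfolding istopology_def
proof (rule conjI; intro allI impI)
  fix S T assume A: "S \<subseteq> q ` topspace X \<and> openin X {x \<in> topspace X. q x \<in> S}"
     "T \<subseteq> q ` topspace X \<and> openin X {x \<in> topspace X. q x \<in> T}"
  have "{x \<in> topspace X. q x \<in> S \<inter> T} = {x \<in> topspace X. q x \<in> S} \<inter> {x \<in> topspace X. q x \<in> T}" by auto
  then show "S \<inter> T \<subseteq> q ` topspace X \<and> openin X {x \<in> topspace X. q x \<in> S \<inter> T}" using A by auto
next
  fix K assume K: "\<forall>S\<in>K. S \<subseteq> q ` topspace X \<and> openin X {x \<in> topspace X. q x \<in> S}"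
  have "{x \<in> topspace X. q x \<in> \<Union>K} = (\<Union>S\<in>K. {x \<in> topspace X. q x \<in> S})" by auto
  then show "\<Union>K \<subseteq> q ` topspace X \<and> openin X {x \<in> topspace X. q x \<in> \<Union>K}" using K by auto
qed

lemma openin_quot_top:
  "openin (quot_top X q) S \<longleftrightarrow> S \<subseteq> q ` topspace X \<and> openin X {x \<in> topspace X. q x \<in> S}"
  unfolding quot_top_def topology_inverse'[OF istopology_quot] by simp

lemma topspace_quot_top [simp]: "topspace (quot_top X q) = q ` topspace X"
proof -
  have "{x \<in> topspace X. q x \<in> q ` topspace X} = topspace X" by auto
  then have "openin (quot_top X q) (q ` topspace X)" by (auto simp: openin_quot_top)
  moreover have "\<And>S. openin (quot_top X q) S \<Longrightarrow> S \<subseteq> q ` topspace X" by (simp add: openin_quot_top)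
  ultimately show ?thesis unfolding topspace_def by blast
qed

lemma topspace_wr_top: "topspace (wr_top U X x0) = wr_pt x0 ` (topspace U \<times> topspace X)"
  by (simp add: wr_top_def)

lemma None_in_wr: "topspace U \<noteq> {} \<Longrightarrow> x0 \<in> topspace X \<Longrightarrow> None \<in> topspace (wr_top U X x0)"
  unfolding topspace_wr_top wr_pt_def by (auto intro!: image_eqI[of _ _ "(SOME u. u \<in> topspace U, x0)"] some_in_eq[THEN iffD2])

lemma dsimplex_nonempty: "finite E \<Longrightarrow> E \<noteq> {} \<Longrightarrow> dsimplex E \<noteq> {}"
proof -
  assume "finite E" "E \<noteq> {}"
  then obtain e where e: "e \<in> E" by blast
  have "(\<lambda>i. if i = e then 1 else 0::real) \<in> dsimplex E"
    using e \<open>finite E\<close> by (auto simp: dsimplex_def)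
  then show ?thesis by blast
qed

lemma filt_wr_transfer:
  assumes V: "V \<in> filt_wr U X x0 Y y0 s"
    and cont: "continuous_map (CO X x0 Y y0) (CO X2 x02 Y2 y02) \<psi>"
    and sh: "\<And>w. w \<in> unbased_maps U (CO X x0 Y y0) \<Longrightarrow>
       sharp U X2 x02 y02 (post \<psi> (topspace U) w) = G (sharp U X x0 y0 w)"
    and Gb: "\<And>f. f \<in> based_maps (wr_top U X x0) None Y y0 \<Longrightarrow> G f \<in> based_maps (wr_top U X2 x02) None Y2 y02"
    and Gr: "\<And>R'. R' \<in> Fsets (wr_top U X2 x02) None (s - 1) \<Longrightarrow>
        \<exists>R \<in> Fsets (wr_top U X x0) None (s - 1). \<exists>\<Gamma>. \<forall>f. restrict (G f) R' = \<Gamma> (restrict f R)"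
  shows "pushR \<psi> (topspace U) V \<in> filt_wr U X2 x02 Y2 y02 s"
proof -
  have Vk: "Poly_Mapping.keys V \<subseteq> unbased_maps U (CO X x0 Y y0)"
    and W: "frag_extend (\<lambda>w. frag_of (sharp U X x0 y0 w)) V \<in> filt (wr_top U X x0) None Y y0 s"
    using V by (auto simp: filt_wr_def free_on_def)
  define W where "W = frag_extend (\<lambda>w. frag_of (sharp U X x0 y0 w)) V"
  have k1: "Poly_Mapping.keys (pushR \<psi> (topspace U) V) \<subseteq> unbased_maps U (CO X2 x02 Y2 y02)"
  proof
    fix w' assume "w' \<in> Poly_Mapping.keys (pushR \<psi> (topspace U) V)"
    then obtain w where w: "w \<in> Poly_Mapping.keys V" "w' = post \<psi> (topspace U) w"
      using pushR_keys by blast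
    then have "continuous_map U (CO X x0 Y y0) w" using Vk by (auto simp: unbased_maps_def)
    then have "continuous_map U (CO X2 x02 Y2 y02) (\<lambda>t. \<psi> (w t))"
      using continuous_map_compose[OF _ cont] by (auto simp: o_def)
    then have "continuous_map U (CO X2 x02 Y2 y02) w'"
      by (rule continuous_map_eq) (auto simp: w post_def)
    then show "w' \<in> unbased_maps U (CO X2 x02 Y2 y02)" by (auto simp: unbased_maps_def w post_def)
  qed
  have eqW: "frag_extend (\<lambda>w. frag_of (sharp U X2 x02 y02 w)) (pushR \<psi> (topspace U) V)
      = frag_extend (\<lambda>f. frag_of (G f)) W"
  proof -
    have "frag_extend (\<lambda>w. frag_of (sharp U X2 x02 y02 w)) (pushR \<psi> (topspace U) V)
       = frag_extend (\<lambda>w. frag_of (sharp U X2 x02 y02 (post \<psi> (topspace U) w))) V"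
      unfolding pushR_def by (subst frag_extend_compose[of _ "post \<psi> (topspace U)", unfolded o_def]) simp
    also have "\<dots> = frag_extend (\<lambda>w. frag_of (G (sharp U X x0 y0 w))) V"
      by (rule frag_extend_eq) (use Vk sh in auto)
    also have "\<dots> = frag_extend (\<lambda>f. frag_of (G f)) W"
      unfolding W_def by (subst frag_extend_compose[of _ "sharp U X x0 y0", unfolded o_def]) simp
    finally show ?thesis .
  qed
  have Wk: "Poly_Mapping.keys W \<subseteq> based_maps (wr_top U X x0) None Y y0"
    and Wr: "\<And>R. R \<in> Fsets (wr_top U X x0) None (s - 1) \<Longrightarrow> restr_frag R W = 0"
    using W unfolding W_def filt_def free_on_def by auto
  have "frag_extend (\<lambda>f. frag_of (G f)) W \<in> filt (wr_top U X2 x02) None Y2 y02 s"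
    unfolding filt_def free_on_def
  proof (intro CollectI conjI ballI)
    show "Poly_Mapping.keys (frag_extend (\<lambda>f. frag_of (G f)) W) \<subseteq> based_maps (wr_top U X2 x02) None Y2 y02"
      using keys_frag_extend[of "\<lambda>f. frag_of (G f)" W] Wk Gb by fastforce
  next
    fix R' assume R': "R' \<in> Fsets (wr_top U X2 x02) None (s - 1)"
    then obtain R \<Gamma> where R: "R \<in> Fsets (wr_top U X x0) None (s - 1)"
      and \<Gamma>: "\<And>f. restrict (G f) R' = \<Gamma> (restrict f R)" using Gr by blast
    have "restr_frag R' (frag_extend (\<lambda>f. frag_of (G f)) W)
        = frag_extend (\<lambda>f. frag_of (\<Gamma> (restrict f R))) W"
      unfolding restr_frag_def
      by (subst frag_extend_compose[of _ G, unfolded o_def]) (simp add: \<Gamma>)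
    also have "\<dots> = frag_extend (\<lambda>g. frag_of (\<Gamma> g)) (restr_frag R W)"
      unfolding restr_frag_def
      by (subst frag_extend_compose[of _ "\<lambda>f. restrict f R", unfolded o_def]) simp
    also have "\<dots> = 0" using Wr[OF R] by simp
    finally show "restr_frag R' (frag_extend (\<lambda>f. frag_of (G f)) W) = 0" .
  qed
  then show ?thesis
    unfolding filt_wr_def free_on_def using k1 eqW by auto
qed

lemma CO_post_cont:
  assumes h: "continuous_map Y Y2 h" "h y0 = y02" and x0: "x0 \<in> topspace X"
  shows "continuous_map (CO X x0 Y y0) (CO X x0 Y2 y02) (\<lambda>f. restrict (h \<circ> f) (topspace X))"
proof (rule continuous_into_CO)
  fix f assume f: "f \<in> based_maps X x0 Y y0"
  then have "continuous_map X Y2 (h \<circ> f)" using h by (auto simp: based_maps_def intro: continuous_map_compose)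
  then have "continuous_map X Y2 (restrict (h \<circ> f) (topspace X))" by (rule continuous_map_eq) auto
  then show "restrict (h \<circ> f) (topspace X) \<in> based_maps X x0 Y2 y02"
    using f h x0 by (auto simp: based_maps_def)
next
  fix K U assume KU: "compactin X K" "openin Y2 U"
  have "{f \<in> based_maps X x0 Y y0. restrict (h \<circ> f) (topspace X) ` K \<subseteq> U}
      = {f \<in> based_maps X x0 Y y0. f ` K \<subseteq> {y \<in> topspace Y. h y \<in> U}}"
  proof (rule Collect_cong)
    fix f
    show "(f \<in> based_maps X x0 Y y0 \<and> restrict (h \<circ> f) (topspace X) ` K \<subseteq> U) =
      (f \<in> based_maps X x0 Y y0 \<and> f ` K \<subseteq> {y \<in> topspace Y. h y \<in> U})"
    proof (cases "f \<in> based_maps X x0 Y y0")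
      case True
      then have "f ` K \<subseteq> topspace Y" using compactin_subset_topspace[OF KU(1)]
        by (auto simp: based_maps_def dest!: continuous_map_image_subset_topspace)
      then show ?thesis using True compactin_subset_topspace[OF KU(1)] by auto
    qed simp
  qed
  moreover have "openin Y {y \<in> topspace Y. h y \<in> U}"
    using openin_continuous_map_preimage[OF h(1) KU(2)] .
  ultimately show "openin (CO X x0 Y y0) {f \<in> based_maps X x0 Y y0. restrict (h \<circ> f) (topspace X) ` K \<subseteq> U}"
    using openin_CO_basic[OF KU(1)] by simp
qed

lemma CO_pre_cont:
  assumes k: "continuous_map X2 X k" "k x02 = x0" and x0: "x02 \<in> topspace X2"
  shows "continuous_map (CO X x0 Y y0) (CO X2 x02 Y y0) (\<lambda>f. restrict (f \<circ> k) (topspace X2))"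
proof (rule continuous_into_CO)
  fix f assume f: "f \<in> based_maps X x0 Y y0"
  then have "continuous_map X2 Y (f \<circ> k)" using k by (auto simp: based_maps_def intro: continuous_map_compose)
  then have "continuous_map X2 Y (restrict (f \<circ> k) (topspace X2))" by (rule continuous_map_eq) auto
  then show "restrict (f \<circ> k) (topspace X2) \<in> based_maps X2 x02 Y y0"
    using f k x0 by (auto simp: based_maps_def)
next
  fix K U assume KU: "compactin X2 K" "openin Y U"
  have "{f \<in> based_maps X x0 Y y0. restrict (f \<circ> k) (topspace X2) ` K \<subseteq> U}
      = {f \<in> based_maps X x0 Y y0. f ` (k ` K) \<subseteq> U}"
    using compactin_subset_topspace[OF KU(1)] by auto
  moreover have "compactin X (k ` K)" using image_compactin[OF KU(1) k(1)] .
  ultimately show "openin (CO X x0 Y y0) {f \<in> based_maps X x0 Y y0. restrict (f \<circ> k) (topspace X2) ` K \<subseteq> U}"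
    using openin_CO_basic[OF _ KU(2)] by simp
qed



lemma wr_h:
  assumes h: "continuous_map Y Y2 h" "h y0 = y02" and x0: "x0 \<in> topspace X"
    and U: "topspace U \<noteq> {}" and V: "V \<in> filt_wr U X x0 Y y0 s"
  shows "pushR (\<lambda>f. restrict (h \<circ> f) (topspace X)) (topspace U) V \<in> filt_wr U X x0 Y2 y02 s"
proof (rule filt_wr_transfer[OF V CO_post_cont[OF h x0],
      where G = "\<lambda>f. restrict (h \<circ> f) (topspace (wr_top U X x0))"])
  fix w assume w: "w \<in> unbased_maps U (CO X x0 Y y0)"
  show "sharp U X x0 y02 (post (\<lambda>f. restrict (h \<circ> f) (topspace X)) (topspace U) w) =
        restrict (h \<circ> sharp U X x0 y0 w) (topspace (wr_top U X x0))"
    unfolding sharp_def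
  proof (rule restrict_ext)
    fix p assume "p \<in> topspace (wr_top U X x0)"
    then obtain u x where p: "p = wr_pt x0 (u, x)" "u \<in> topspace U" "x \<in> topspace X"
      unfolding topspace_wr_top by auto
    show "(case p of None \<Rightarrow> y02 | Some (u, x) \<Rightarrow> post (\<lambda>f. restrict (h \<circ> f) (topspace X)) (topspace U) w u x) =
        (h \<circ> restrict (\<lambda>p. case p of None \<Rightarrow> y0 | Some (u, x) \<Rightarrow> w u x) (topspace (wr_top U X x0))) p"
      using p h \<open>p \<in> topspace (wr_top U X x0)\<close> by (auto simp: wr_pt_def post_def)
  qed
next
  fix f assume f: "f \<in> based_maps (wr_top U X x0) None Y y0"
  then have "continuous_map (wr_top U X x0) Y2 (h \<circ> f)" using h by (auto simp: based_maps_def intro: continuous_map_compose)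
  then have "continuous_map (wr_top U X x0) Y2 (restrict (h \<circ> f) (topspace (wr_top U X x0)))"
    by (rule continuous_map_eq) auto
  then show "restrict (h \<circ> f) (topspace (wr_top U X x0)) \<in> based_maps (wr_top U X x0) None Y2 y02"
    using f h None_in_wr[OF U x0] by (auto simp: based_maps_def)
next
  fix R' assume R': "R' \<in> Fsets (wr_top U X x0) None (s - 1)"
  show "\<exists>R\<in>Fsets (wr_top U X x0) None (s - 1). \<exists>\<Gamma>. \<forall>f.
      restrict (restrict (h \<circ> f) (topspace (wr_top U X x0))) R' = \<Gamma> (restrict f R)"
    using R' by (intro bexI[of _ R'] exI[of _ "\<lambda>g. restrict (h \<circ> g) R'"])
      (auto simp: Fsets_def restrict_def fun_eq_iff)
qed

definition kap :: "'x \<Rightarrow> ('x2 \<Rightarrow> 'x) \<Rightarrow> ('u \<times> 'x2) option \<Rightarrow> ('u \<times> 'x) option" where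
  "kap x0 k p = (case p of None \<Rightarrow> None | Some (u, x') \<Rightarrow> wr_pt x0 (u, k x'))"

lemma kap_wr: "k x02 = x0 \<Longrightarrow> kap x0 k (wr_pt x02 (u, x')) = wr_pt x0 (u, k x')"
  by (simp add: wr_pt_def kap_def)

lemma kap_cont:
  assumes k: "continuous_map X2 X k" "k x02 = x0"
  shows "continuous_map (wr_top U X2 x02) (wr_top U X x0) (kap x0 k)"
  unfolding continuous_map_def
proof (intro conjI allI impI)
  show "kap x0 k \<in> topspace (wr_top U X2 x02) \<rightarrow> topspace (wr_top U X x0)"
  proof
    fix p assume "p \<in> topspace (wr_top U X2 x02)"
    then obtain u x where p: "p = wr_pt x02 (u, x)" "u \<in> topspace U" "x \<in> topspace X2"
      unfolding topspace_wr_top by auto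
    then have "k x \<in> topspace X" using k(1) p(3) continuous_map_image_subset_topspace by blast
    then show "kap x0 k p \<in> topspace (wr_top U X x0)"
      unfolding topspace_wr_top using p k(2) by (auto simp: kap_wr)
  qed
  fix S assume S: "openin (wr_top U X x0) S"
  then have So: "openin (prod_topology U X) {z \<in> topspace (prod_topology U X). wr_pt x0 z \<in> S}"
    unfolding wr_top_def openin_quot_top by auto
  have c: "continuous_map (prod_topology U X2) (prod_topology U X) (\<lambda>z. (fst z, k (snd z)))"
    by (intro continuous_map_pairedI continuous_map_fst)
       (rule continuous_map_compose[OF continuous_map_snd k(1), unfolded o_def])
  have eq: "{z \<in> topspace (prod_topology U X2). wr_pt x02 z \<in> {p \<in> topspace (wr_top U X2 x02). kap x0 k p \<in> S}}
      = {z \<in> topspace (prod_topology U X2). (fst z, k (snd z)) \<in> {z \<in> topspace (prod_topology U X). wr_pt x0 z \<in> S}}"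
  proof (rule Collect_cong)
    fix z
    show "(z \<in> topspace (prod_topology U X2) \<and> wr_pt x02 z \<in> {p \<in> topspace (wr_top U X2 x02). kap x0 k p \<in> S}) =
          (z \<in> topspace (prod_topology U X2) \<and> (fst z, k (snd z)) \<in> {z \<in> topspace (prod_topology U X). wr_pt x0 z \<in> S})"
    proof (cases "z \<in> topspace (prod_topology U X2)")
      case True
      obtain u x where z: "z = (u, x)" by (cases z)
      have "x \<in> topspace X2" using True z by auto
      then have "k x \<in> topspace X" using k(1) continuous_map_image_subset_topspace by fastforce
      then show ?thesis using True z k(2) unfolding topspace_wr_top by (auto simp: kap_wr)
    qed simp
  qed
  show "openin (wr_top U X2 x02) {p \<in> topspace (wr_top U X2 x02). kap x0 k p \<in> S}"
    unfolding wr_top_def openin_quot_top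
    using openin_continuous_map_preimage[OF c So] eq
    by (auto simp: wr_top_def)
qed


lemma wr_k:
  assumes k: "continuous_map X2 X k" "k x02 = x0" and x02: "x02 \<in> topspace X2"
    and U: "topspace U \<noteq> {}" and V: "V \<in> filt_wr U X x0 Y y0 s"
  shows "pushR (\<lambda>f. restrict (f \<circ> k) (topspace X2)) (topspace U) V \<in> filt_wr U X2 x02 Y y0 s"
proof (rule filt_wr_transfer[OF V CO_pre_cont[OF k x02],
      where G = "\<lambda>f. restrict (f \<circ> kap x0 k) (topspace (wr_top U X2 x02))"])
  have x0: "x0 \<in> topspace X" using k x02 continuous_map_image_subset_topspace by fastforce
  have kT: "kap x0 k p \<in> topspace (wr_top U X x0)" if "p \<in> topspace (wr_top U X2 x02)" for p
    using kap_cont[OF k, of U] that continuous_map_image_subset_topspace by fastforce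
  fix w assume w: "w \<in> unbased_maps U (CO X x0 Y y0)"
  show "sharp U X2 x02 y0 (post (\<lambda>f. restrict (f \<circ> k) (topspace X2)) (topspace U) w) =
        restrict (sharp U X x0 y0 w \<circ> kap x0 k) (topspace (wr_top U X2 x02))"
    unfolding sharp_def[of U X2]
    apply (rule restrict_ext)
    subgoal premises prems for p
    proof -
      obtain u x where p: "p = wr_pt x02 (u, x)" "u \<in> topspace U" "x \<in> topspace X2"
        using prems unfolding topspace_wr_top by auto
      have kx: "k x \<in> topspace X" using k(1) p(3) continuous_map_image_subset_topspace by fastforce
      have wu: "w u \<in> based_maps X x0 Y y0"
        using w p(2) continuous_map_image_subset_topspace unfolding unbased_maps_def by fastforce
      have kp: "kap x0 k p = wr_pt x0 (u, k x)" using p k(2) kap_wr by metis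
      have kpT: "wr_pt x0 (u, k x) \<in> topspace (wr_top U X x0)" using kT[OF prems] kp by simp
      have NT: "None \<in> topspace (wr_top U X x0)" using None_in_wr[OF U x0] .
      show ?thesis
      proof (cases "x = x02")
        case True
        then show ?thesis using p kp NT k(2) by (simp add: wr_pt_def sharp_def)
      next
        case False
        then show ?thesis using p kp kpT wu kx
          by (auto simp: wr_pt_def sharp_def post_def based_maps_def split: if_splits)
      qed
    qed
    done
next
  have x0: "x0 \<in> topspace X" using k x02 continuous_map_image_subset_topspace by fastforce
  fix f assume f: "f \<in> based_maps (wr_top U X x0) None Y y0"
  then have "continuous_map (wr_top U X2 x02) Y (f \<circ> kap x0 k)"
    using kap_cont[OF k] by (auto simp: based_maps_def intro: continuous_map_compose)
  then have "continuous_map (wr_top U X2 x02) Y (restrict (f \<circ> kap x0 k) (topspace (wr_top U X2 x02)))"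
    by (rule continuous_map_eq) auto
  then show "restrict (f \<circ> kap x0 k) (topspace (wr_top U X2 x02)) \<in> based_maps (wr_top U X2 x02) None Y y0"
    using f None_in_wr[OF U x02] by (auto simp: based_maps_def kap_def)
next
  fix R' assume R': "R' \<in> Fsets (wr_top U X2 x02) None (s - 1)"
  have kT: "kap x0 k p \<in> topspace (wr_top U X x0)" if "p \<in> topspace (wr_top U X2 x02)" for p
    using kap_cont[OF k, of U] that continuous_map_image_subset_topspace by fastforce
  have "kap x0 k ` R' \<in> Fsets (wr_top U X x0) None (s - 1)"
    using R' kT card_image_le[of R' "kap x0 k"] unfolding Fsets_def
    by (auto simp: kap_def intro!: image_eqI[of None _ None])
  then show "\<exists>R\<in>Fsets (wr_top U X x0) None (s - 1). \<exists>\<Gamma>. \<forall>f.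
      restrict (restrict (f \<circ> kap x0 k) (topspace (wr_top U X2 x02))) R' = \<Gamma> (restrict f R)"
    using R' by (intro bexI[of _ "kap x0 k ` R'"] exI[of _ "\<lambda>g. restrict (g \<circ> kap x0 k) R'"])
      (auto simp: Fsets_def restrict_def fun_eq_iff)
qed


lemma cellular_base: "cellular_space X x0 \<Longrightarrow> x0 \<in> topspace X"
  unfolding cellular_space_def cw_structure_def by blast

theorem corollary5p1:
  fixes X :: "'x topology" and Y :: "'y topology"
    and X' :: "'x2 topology" and Y' :: "'y2 topology"
    and r :: nat
  assumes "cellular_space X x0" and "cellular_space Y y0"
    and "cellular_space X' x0'" and "cellular_space Y' y0'"
    and "compact_space X" and "compact_space X'"
    and "continuous_map X' X k" and "k x0' = x0"
    and "continuous_map Y Y' h" and "h y0 = y0'"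
    and "continuous_map X Y a" and "a x0 = y0"
    and "continuous_map X Y b" and "b x0 = y0"
    and "approx_r X x0 Y y0 r a b"
  shows "approx_r X' x0' Y y0 r (a \<circ> k) (b \<circ> k) \<and> approx_r X x0 Y' y0' r (h \<circ> a) (h \<circ> b)"
proof
  have x0: "x0 \<in> topspace X" using assms(1) by (rule cellular_base)
  have x0': "x0' \<in> topspace X'" using assms(3) by (rule cellular_base)
  have kT: "k x \<in> topspace X" if "x \<in> topspace X'" for x
    using assms(7) that continuous_map_image_subset_topspace by fastforce
  show "approx_r X' x0' Y y0 r (a \<circ> k) (b \<circ> k)"
  proof (rule approx_transfer[OF CO_pre_cont[OF assms(7,8) x0'] _ _ _ assms(15)])
    fix E :: "nat set" and V assume E: "finite E" "E \<noteq> {}"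
      and V: "V \<in> filt_wr (dsimplex_top E) X x0 Y y0 (Suc r)"
    show "pushR (\<lambda>f. restrict (f \<circ> k) (topspace X')) (dsimplex E) V
        \<in> filt_wr (dsimplex_top E) X' x0' Y y0 (Suc r)"
      using wr_k[OF assms(7,8) x0' _ V] dsimplex_nonempty[OF E] by simp
  next
    show "restrict (restrict a (topspace X) \<circ> k) (topspace X') = restrict (a \<circ> k) (topspace X')"
      by (rule restrict_ext) (simp add: kT)
    show "restrict (restrict b (topspace X) \<circ> k) (topspace X') = restrict (b \<circ> k) (topspace X')"
      by (rule restrict_ext) (simp add: kT)
  qed
  show "approx_r X x0 Y' y0' r (h \<circ> a) (h \<circ> b)"
  proof (rule approx_transfer[OF CO_post_cont[OF assms(9,10) x0] _ _ _ assms(15)])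
    fix E :: "nat set" and V assume E: "finite E" "E \<noteq> {}"
      and V: "V \<in> filt_wr (dsimplex_top E) X x0 Y y0 (Suc r)"
    show "pushR (\<lambda>f. restrict (h \<circ> f) (topspace X)) (dsimplex E) V
        \<in> filt_wr (dsimplex_top E) X x0 Y' y0' (Suc r)"
      using wr_h[OF assms(9,10) x0 _ V] dsimplex_nonempty[OF E] by simp
  next
    show "restrict (h \<circ> restrict a (topspace X)) (topspace X) = restrict (h \<circ> a) (topspace X)"
      by (rule restrict_ext) simp
    show "restrict (h \<circ> restrict b (topspace X)) (topspace X) = restrict (h \<circ> b) (topspace X)"
      by (rule restrict_ext) simp
  qed
qed

end
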